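(* Let $R$ be a power-serieswise Armendariz ring. Then the power series ring $R[[x]]$ is a generalized right Baer ring if and only if $R$ is a generalized right Baer ring.
   Context: All rings are associative with identity. For a nonempty subset $X$ of a ring $R$, $r_R(X)=\{a\in R : xa=0 \text{ for all } x\in X\}$, and for a positive integer $n$, $X^n$ denotes the set of all products $a_1\cdots a_n$ with $a_i\in X$. A ring $R$ is generalized right Baer if for every nonempty subset $X$ of $R$ there exist a positive integer $n$ (depending on $X$) and an idempotent $e\in R$ with $r_R(X^n)=eR$. A ring $R$ is power-serieswise Armendariz if whenever $f(x)=\sum_{i\ge0}a_ix^i$ and $g(x)=\sum_{j\ge0}b_jx^j$ in $R[[x]]$ satisfy $f(x)g(x)=0$, then $a_ib_j=0$ for all $i,j$. *)

theory Defs
  imports "HOL-Computational_Algebra.Formal_Power_Series"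
begin

definition r_ann :: "'a::ring_1 set \<Rightarrow> 'a set" where
  "r_ann X = {a. \<forall>x\<in>X. x * a = 0}"

text \<open>X^n: all products a_1 ... a_n with a_i in X (n \<ge> 1); set_pow X 0 is unused.\<close>
fun set_pow :: "'a::ring_1 set \<Rightarrow> nat \<Rightarrow> 'a set" where
  "set_pow X 0 = {1}"
| "set_pow X (Suc 0) = X"
| "set_pow X (Suc (Suc n)) = {y * x | y x. y \<in> set_pow X (Suc n) \<and> x \<in> X}"

definition gen_right_Baer :: "'a::ring_1 itself \<Rightarrow> bool" where
  "gen_right_Baer _ \<longleftrightarrow>
     (\<forall>X::'a set. X \<noteq> {} \<longrightarrow>
        (\<exists>n>0. \<exists>e::'a. e * e = e \<and> r_ann (set_pow X n) = {e * r | r. True}))"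

definition ps_Armendariz :: "'a::ring_1 itself \<Rightarrow> bool" where
  "ps_Armendariz _ \<longleftrightarrow>
     (\<forall>f g :: 'a fps. f * g = 0 \<longrightarrow> (\<forall>i j. fps_nth f i * fps_nth g j = 0))"

end

theory Submission
  imports Defs
begin

unbundle fps_syntax

lemma setpow_const:
  "set_pow (fps_const ` (X::'a::ring_1 set)) (Suc k) = fps_const ` set_pow X (Suc k)"
proof (induction k)
  case 0 then show ?case by simp
next
  case (Suc k)
  show ?case
    apply (simp only: set_pow.simps Suc)
    apply (auto simp: image_iff)
    apply (metis fps_const_mult)
    apply (metis fps_const_mult)
    done
qed

lemma lemA:
  fixes F :: "'a::ring_1 fps set"
  defines "C \<equiv> {f $ i | f i. f \<in> F}"
  shows "P \<in> set_pow F (Suc m) \<Longrightarrow> (\<forall>c \<in> set_pow C (Suc m). c * d = 0) \<Longrightarrow> P $ k * d = 0"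
proof (induction m arbitrary: P d k)
  case 0 then show ?case by (auto simp: C_def)
next
  case (Suc m)
  from Suc.prems(1) obtain Q f where Q: "Q \<in> set_pow F (Suc m)" "f \<in> F" "P = Q * f" by auto
  have "Q $ i * (f $ (k - i) * d) = 0" for i
  proof (rule Suc.IH[OF Q(1)], intro ballI)
    fix c assume "c \<in> set_pow C (Suc m)"
    hence "c * f $ (k - i) \<in> set_pow C (Suc (Suc m))" using Q(2) by (auto simp: C_def)
    thus "c * (f $ (k - i) * d) = 0" using Suc.prems(2) by (metis mult.assoc)
  qed
  hence "(\<Sum>i=0..k. Q$i * f$(k - i)) * d = 0"
    by (simp add: sum_distrib_right mult.assoc)
  thus ?case using Q(3) by (simp add: fps_mult_nth)
qed

lemma lemB:
  fixes F :: "'a::ring_1 fps set"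
  assumes arm: "ps_Armendariz TYPE('a)"
  defines "C \<equiv> {f $ i | f i. f \<in> F}"
  shows "c \<in> set_pow C (Suc m) \<Longrightarrow> (\<forall>P \<in> set_pow F (Suc m). P * h = 0) \<Longrightarrow> c * h $ j = 0"
proof (induction m arbitrary: c h j)
  case 0
  then obtain f i where "f \<in> F" "c = f $ i" by (auto simp: C_def)
  with 0 have "f * h = 0" by auto
  with arm show ?case unfolding ps_Armendariz_def using \<open>c = f $ i\<close> by blast
next
  case (Suc m)
  from Suc.prems(1) obtain c' f i where cf: "c' \<in> set_pow C (Suc m)" "f \<in> F" "c = c' * f $ i"
    by (auto simp: C_def)
  have "\<forall>P \<in> set_pow F (Suc m). P * (f * h) = 0"
  proof
    fix P assume "P \<in> set_pow F (Suc m)"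
    hence "P * f \<in> set_pow F (Suc (Suc m))" using cf(2) by auto
    thus "P * (f * h) = 0" using Suc.prems(2) by (metis mult.assoc)
  qed
  hence "\<And>k. c' * (f * h) $ k = 0" using Suc.IH[OF cf(1)] by blast
  hence "fps_const c' * (f * h) = 0" by (simp add: fps_eq_iff)
  hence "(fps_const c' * f) * h = 0" by (simp add: mult.assoc)
  with arm have "(fps_const c' * f) $ i * h $ j = 0" unfolding ps_Armendariz_def by blast
  thus ?case using cf(3) by (simp add: mult.assoc)
qed

theorem corollary3p10:
  assumes "ps_Armendariz TYPE('a::ring_1)"
  shows "gen_right_Baer TYPE('a fps) \<longleftrightarrow> gen_right_Baer TYPE('a)"
proof
  assume H: "gen_right_Baer TYPE('a fps)"
  show "gen_right_Baer TYPE('a)"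
    unfolding gen_right_Baer_def
  proof (intro allI impI)
    fix X :: "'a set" assume "X \<noteq> {}"
    hence ne0: "fps_const ` X \<noteq> {}" by simp
    have all: "\<forall>Y::'a fps set. Y \<noteq> {} \<longrightarrow>
        (\<exists>n>0. \<exists>e. e * e = e \<and> r_ann (set_pow Y n) = {e * r | r. True})"
      using H unfolding gen_right_Baer_def by simp
    have "\<exists>n>0. \<exists>e. e * e = e \<and> r_ann (set_pow (fps_const ` X) n) = {e * r | r. True}"
      by (rule all[rule_format, OF ne0])
    then obtain n E where nE: "n > 0" "E * E = E"
      "r_ann (set_pow (fps_const ` X) n) = {E * r | r. True}"
      by (elim exE conjE)
    then obtain k where k: "n = Suc k" using gr0_implies_Suc by blast
    have S: "set_pow (fps_const ` X) n = fps_const ` set_pow X n"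
      using k setpow_const by simp
    have "E \<in> r_ann (set_pow (fps_const ` X) n)" unfolding nE(3)
      proof (rule CollectI, rule exI[of _ 1]) qed simp
    hence EX: "y * E $ 0 = 0" if "y \<in> set_pow X n" for y
    proof -
      have "fps_const y * E = 0" using \<open>E \<in> _\<close> that S unfolding r_ann_def by auto
      hence "(fps_const y * E) $ 0 = 0" by simp
      thus ?thesis by simp
    qed
    have "E $ 0 * E $ 0 = E $ 0" using arg_cong[OF nE(2), of "\<lambda>f. f $ 0"] by simp
    moreover have "r_ann (set_pow X n) = {E $ 0 * r | r. True}"
    proof (rule set_eqI, rule iffI)
      fix a assume a: "a \<in> r_ann (set_pow X n)"
      have "fps_const a \<in> r_ann (set_pow (fps_const ` X) n)"
        unfolding S r_ann_def
      proof (intro CollectI ballI)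
        fix x assume "x \<in> fps_const ` set_pow X n"
        then obtain y where "y \<in> set_pow X n" "x = fps_const y" "y * a = 0" using a unfolding r_ann_def by blast
        thus "x * fps_const a = 0" by simp
      qed
      then obtain r where "fps_const a = E * r" using nE(3) by auto
      hence "fps_const a $ 0 = (E * r) $ 0" by simp
      hence "a = E $ 0 * r $ 0" by simp
      thus "a \<in> {E $ 0 * r | r. True}" by blast
    next
      fix a assume "a \<in> {E $ 0 * r | r. True}"
      then obtain r where "a = E $ 0 * r" by blast
      thus "a \<in> r_ann (set_pow X n)" unfolding r_ann_def using EX by (simp add: mult.assoc[symmetric])
    qed
    ultimately show "\<exists>n>0. \<exists>e. e * e = e \<and> r_ann (set_pow X n) = {e * r | r. True}"
      using nE(1) by (intro exI[of _ n] conjI exI[of _ "E $ 0"]) auto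
  qed
next
  assume H: "gen_right_Baer TYPE('a)"
  show "gen_right_Baer TYPE('a fps)"
    unfolding gen_right_Baer_def
  proof (intro allI impI)
    fix F :: "'a fps set" assume "F \<noteq> {}"
    define C where "C = {f $ i | f i. f \<in> F}"
    have ne0: "C \<noteq> {}" using \<open>F \<noteq> {}\<close> unfolding C_def by blast
    have all: "\<forall>Y::'a set. Y \<noteq> {} \<longrightarrow>
        (\<exists>n>0. \<exists>e. e * e = e \<and> r_ann (set_pow Y n) = {e * r | r. True})"
      using H unfolding gen_right_Baer_def by simp
    have "\<exists>n>0. \<exists>e. e * e = e \<and> r_ann (set_pow C n) = {e * r | r. True}"
      by (rule all[rule_format, OF ne0])
    then obtain n e where ne: "n > 0" "e * e = e" "r_ann (set_pow C n) = {e * r | r. True}"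
      by (elim exE conjE)
    then obtain k where k: "n = Suc k" using gr0_implies_Suc by blast
    have eC: "c * e = 0" if "c \<in> set_pow C n" for c
    proof -
      have "e \<in> r_ann (set_pow C n)" unfolding ne(3)
      proof (rule CollectI, rule exI[of _ 1]) qed simp
      thus ?thesis using that unfolding r_ann_def by blast
    qed
    have "fps_const e * fps_const e = fps_const e" using ne(2) by simp
    moreover have "r_ann (set_pow F n) = {fps_const e * r | r. True}"
    proof (rule set_eqI, rule iffI)
      fix g assume g: "g \<in> r_ann (set_pow F n)"
      have "g $ j \<in> r_ann (set_pow C n)" for j
        unfolding r_ann_def
      proof (intro CollectI ballI)
        fix c assume "c \<in> set_pow C n"
        thus "c * g $ j = 0" using lemB[OF assms, where c=c and m=k and F=F and h=g and j=j] g k unfolding r_ann_def C_def by auto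
      qed
      have "e * g $ j = g $ j" for j
      proof -
        obtain r where "g $ j = e * r" using ne(3) \<open>g $ j \<in> r_ann (set_pow C n)\<close> by blast
        thus ?thesis using ne(2) by (metis mult.assoc)
      qed
      hence "g = fps_const e * g" by (simp add: fps_eq_iff)
      thus "g \<in> {fps_const e * r | r. True}" by blast
    next
      fix g assume "g \<in> {fps_const e * r | r. True}"
      then obtain r where r: "g = fps_const e * r" by blast
      show "g \<in> r_ann (set_pow F n)" unfolding r_ann_def
      proof (intro CollectI ballI)
        fix P assume P: "P \<in> set_pow F n"
        have "P $ i * e = 0" for i
          using lemA[where P=P and F=F and m=k and d=e and k=i] P k eC unfolding C_def by auto
        hence "P * fps_const e = 0" by (simp add: fps_eq_iff)
        thus "P * g = 0" using r by (metis mult.assoc mult_zero_left)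
      qed
    qed
    ultimately show "\<exists>n>0. \<exists>E. E * E = E \<and> r_ann (set_pow F n) = {E * r | r. True}"
      using ne(1) by (intro exI[of _ n] conjI exI[of _ "fps_const e"]) auto
  qed
qed

end
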